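(* As $N\to\infty$, $$\frac{1}{N}\sum_{n\le N} R_3(n)\sim \frac{1}{2}\log^2 N .$$
   Context: For a positive integer $n$, $R_3(n)$ denotes the number of ordered triples $(x,y,z)$ of positive integers with $n = xyz + x + y + z$. *)

theory Defs
  imports "HOL-Analysis.Analysis" "HOL-Library.Landau_Symbols"
begin

definition R3 :: "nat \<Rightarrow> nat" where
  "R3 n = card {(x, y, z). (x::nat) \<ge> 1 \<and> (y::nat) \<ge> 1 \<and> (z::nat) \<ge> 1 \<and> n = x * y * z + x + y + z}"

end

theory Submission
  imports Defs
begin

lemma harm_le_ln: "n \<ge> 1 \<Longrightarrow> (harm n :: real) \<le> ln (real n) + 1"
proof (induction n rule: nat_induct_at_least)
  case base
  then show ?case by (simp add: harm_def)
next
  case (Suc n)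
  have "ln (real n / (real n + 1)) \<le> real n / (real n + 1) - 1"
    using Suc.hyps by (intro ln_le_minus_one) auto
  also have "\<dots> = - 1 / (real n + 1)" by (simp add: field_simps)
  finally have "ln (real n / (real n + 1)) \<le> - 1 / (real n + 1)" .
  moreover have "ln (real n / (real n + 1)) = ln (real n) - ln (real n + 1)"
    using Suc.hyps by (simp add: ln_div)
  ultimately have *: "1 / (real n + 1) \<le> ln (real n + 1) - ln (real n)" by simp
  have "harm (Suc n) = harm n + 1 / (real n + 1)" by (simp add: harm_Suc field_simps)
  also have "\<dots> \<le> ln (real n) + 1 + 1 / (real n + 1)" using Suc.IH by simp
  also have "\<dots> \<le> ln (real n + 1) + 1" using * by linarith
  also have "\<dots> = ln (real (Suc n)) + 1" by (simp add: add.commute)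
  finally show ?case .
qed

lemma tele_step:
  fixes t :: real and k :: nat
  assumes k: "k \<ge> 1" and kt: "real k + 1 \<le> t"
  defines "a \<equiv> ln (t / real k)" and "b \<equiv> ln (t / (real k + 1))"
  shows "b / (real k + 1) \<le> a\<^sup>2/2 - b\<^sup>2/2" and "a\<^sup>2/2 - b\<^sup>2/2 \<le> a / real k"
proof -
  have kpos: "real k > 0" using k by simp
  have tpos: "t > 0" using kt kpos by simp
  have b0: "b \<ge> 0" unfolding b_def using kt kpos by simp
  have ab: "a - b = ln (real k + 1) - ln (real k)"
    unfolding a_def b_def using tpos kpos by (simp add: ln_div)
  have d1: "1 / (real k + 1) \<le> a - b"
  proof -
    have "ln (real k / (real k + 1)) \<le> real k / (real k + 1) - 1"
      using kpos by (intro ln_le_minus_one) auto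
    also have "\<dots> = - 1 / (real k + 1)" by (simp add: field_simps)
    finally show ?thesis using ab kpos by (simp add: ln_div)
  qed
  have d2: "a - b \<le> 1 / real k"
  proof -
    have "ln ((real k + 1) / real k) \<le> (real k + 1) / real k - 1"
      using kpos by (intro ln_le_minus_one) auto
    also have "\<dots> = 1 / real k" using kpos by (simp add: field_simps)
    finally show ?thesis using ab kpos by (simp add: ln_div)
  qed
  have ba: "b \<le> a" using d1 kpos by (smt (verit) divide_pos_pos)
  have eq: "a\<^sup>2/2 - b\<^sup>2/2 = (a - b) * ((a + b) / 2)" by (simp add: power2_eq_square algebra_simps)
  have s0: "(a + b) / 2 \<ge> 0" using b0 ba by simp
  have "b / (real k + 1) \<le> 1 / (real k + 1) * ((a + b) / 2)"
    using ba kpos by (simp add: field_simps) (smt (verit) mult_right_mono of_nat_0_le_iff)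
  also have "\<dots> \<le> (a - b) * ((a + b) / 2)" using d1 s0 by (rule mult_right_mono)
  finally show "b / (real k + 1) \<le> a\<^sup>2/2 - b\<^sup>2/2" using eq by linarith
  have "(a - b) * ((a + b) / 2) \<le> 1 / real k * ((a + b) / 2)" using d2 s0 by (rule mult_right_mono)
  also have "\<dots> \<le> a / real k" using ba kpos by (simp add: field_simps)
  finally show "a\<^sup>2/2 - b\<^sup>2/2 \<le> a / real k" using eq by linarith
qed

lemma tele_sum:
  fixes t :: real
  assumes "n \<ge> 1"
  shows "real n \<le> t \<longrightarrow>
     ln t ^ 2 / 2 - ln (t / real n) ^ 2 / 2 + ln (t / real n) / real n
        \<le> (\<Sum>k=1..n. ln (t / real k) / real k)
   \<and> (\<Sum>k=1..n. ln (t / real k) / real k) \<le> ln t + ln t ^ 2 / 2 - ln (t / real n) ^ 2 / 2"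
  using assms
proof (induction n rule: nat_induct_at_least)
  case base
  then show ?case by simp
next
  case (Suc n)
  show ?case
  proof
    assume h: "real (Suc n) \<le> t"
    then have h': "real n + 1 \<le> t" by simp
    from Suc.IH h have IH: "ln t ^ 2 / 2 - ln (t / real n) ^ 2 / 2 + ln (t / real n) / real n
        \<le> (\<Sum>k=1..n. ln (t / real k) / real k)"
      "(\<Sum>k=1..n. ln (t / real k) / real k) \<le> ln t + ln t ^ 2 / 2 - ln (t / real n) ^ 2 / 2"
      by auto
    note st = tele_step[OF Suc.hyps h']
    have sum: "(\<Sum>k=1..Suc n. ln (t / real k) / real k)
        = (\<Sum>k=1..n. ln (t / real k) / real k) + ln (t / (real n + 1)) / (real n + 1)"
      by (simp add: add_ac)
    show "ln t ^ 2 / 2 - ln (t / real (Suc n)) ^ 2 / 2 + ln (t / real (Suc n)) / real (Suc n)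
        \<le> (\<Sum>k=1..Suc n. ln (t / real k) / real k)
   \<and> (\<Sum>k=1..Suc n. ln (t / real k) / real k) \<le> ln t + ln t ^ 2 / 2 - ln (t / real (Suc n)) ^ 2 / 2"
      unfolding sum using IH st by (simp add: add_ac)
  qed
qed

lemma T_bounds:
  assumes N: "N \<ge> 1"
  shows "ln (real N) ^ 2 / 2 \<le> (\<Sum>k=1..N. ln (real N / real k) / real k)"
    and "(\<Sum>k=1..N. ln (real N / real k) / real k) \<le> ln (real N) + ln (real N) ^ 2 / 2"
  using tele_sum[OF N, of "real N"] N by auto

lemma count_iff:
  fixes x y z N :: nat
  assumes "x \<ge> 1" "y \<ge> 1" "z \<ge> 1"
  shows "(x*y*z + x + y + z \<le> N) \<longleftrightarrow> (x \<le> N \<and> y \<le> N \<and> z \<le> (N - x - y) div (x*y+1))"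
proof -
  have "z \<le> (N - x - y) div (x*y+1) \<longleftrightarrow> z * (x*y+1) \<le> N - x - y"
    by (rule less_eq_div_iff_mult_less_eq) simp
  also have "z * (x*y+1) = x*y*z + z" by (simp add: algebra_simps)
  finally have e: "z \<le> (N - x - y) div (x*y+1) \<longleftrightarrow> x*y*z + z \<le> N - x - y" .
  show ?thesis unfolding e using assms by arith
qed

lemma sum_R3_eq:
  "(\<Sum>n\<in>{1..N}. R3 n) = (\<Sum>x=1..N. \<Sum>y=1..N. (N - x - y) div (x*y+1))"
proof -
  define A where "A n = {(x, y, z). (x::nat) \<ge> 1 \<and> (y::nat) \<ge> 1 \<and> (z::nat) \<ge> 1 \<and> n = x * y * z + x + y + z}" for n
  define P where "P = {(x, y, z). (x::nat) \<ge> 1 \<and> (y::nat) \<ge> 1 \<and> (z::nat) \<ge> 1 \<and> x * y * z + x + y + z \<le> N}"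
  have R: "R3 n = card (A n)" for n by (simp add: R3_def A_def)
  have fin: "finite (A n)" for n
  proof (rule finite_subset)
    show "A n \<subseteq> {0..n} \<times> {0..n} \<times> {0..n}" by (auto simp: A_def)
  qed auto
  have "(\<Sum>n\<in>{1..N}. card (A n)) = card (\<Union>n\<in>{1..N}. A n)"
    apply (rule card_UN_disjoint[symmetric])
    apply (simp_all add: fin)
    apply (auto simp: A_def)
    done
  also have "(\<Union>n\<in>{1..N}. A n) = P"
  proof (rule set_eqI)
    fix p :: "nat \<times> nat \<times> nat"
    obtain x y z where p: "p = (x, y, z)" by (cases p) auto
    show "p \<in> (\<Union>n\<in>{1..N}. A n) \<longleftrightarrow> p \<in> P"
    proof
      assume "p \<in> (\<Union>n\<in>{1..N}. A n)" then show "p \<in> P" by (auto simp: A_def P_def p)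
    next
      assume "p \<in> P"
      then have "p \<in> A (x*y*z+x+y+z)" "x*y*z+x+y+z \<in> {1..N}" by (auto simp: A_def P_def p)
      then show "p \<in> (\<Union>n\<in>{1..N}. A n)" by blast
    qed
  qed
  also have "P = (SIGMA x:{1..N}. SIGMA y:{1..N}. {1..(N - x - y) div (x*y+1)})"
  proof (rule set_eqI)
    fix p :: "nat \<times> nat \<times> nat"
    obtain x y z where p: "p = (x, y, z)" by (cases p) auto
    show "p \<in> P \<longleftrightarrow> p \<in> (SIGMA x:{1..N}. SIGMA y:{1..N}. {1..(N - x - y) div (x*y+1)})"
      unfolding p P_def using count_iff[of x y z N] by auto
  qed
  also have "card \<dots> = (\<Sum>x=1..N. \<Sum>y=1..N. (N - x - y) div (x*y+1))"
    by simp
  finally show ?thesis by (simp add: R)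
qed

lemma real_div_ge: "b > 0 \<Longrightarrow> real (a div b) \<ge> real a / real b - 1"
proof -
  assume b: "b > 0"
  have "a = b * (a div b) + a mod b" by simp
  then have "real a = real b * real (a div b) + real (a mod b)" by (metis of_nat_add of_nat_mult)
  moreover have "real (a mod b) < real b" using b by simp
  ultimately have "real a < real b * (real (a div b) + 1)" by (simp add: algebra_simps)
  then show ?thesis using b by (simp add: field_simps)
qed

lemma harm_shift: "(\<Sum>y=1..m. 1 / (real y + 1)) = harm (Suc m) - (1::real)"
proof (induction m)
  case 0
  then show ?case by (simp add: harm_def)
next
  case (Suc m)
  have "(\<Sum>y=1..Suc m. 1 / (real y + 1)) = (\<Sum>y=1..m. 1 / (real y + 1)) + 1 / (real (Suc m) + 1)"
    by simp
  also have "\<dots> = harm (Suc m) - 1 + 1 / (real (Suc m) + 1)" using Suc by simp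
  also have "\<dots> = harm (Suc (Suc m)) - 1" by (simp add: harm_Suc divide_inverse add.commute)
  finally show ?case .
qed

lemma inner_upper:
  assumes x: "1 \<le> x" "x \<le> N"
  shows "real (\<Sum>y=1..N. (N - x - y) div (x*y+1)) \<le> real N / real x * (ln (real N / real x) + 1)"
proof -
  define m where "m = N div x"
  have xpos: "real x > 0" using x by simp
  have m1: "m \<ge> 1" unfolding m_def using x less_eq_div_iff_mult_less_eq[of x 1 N] by simp
  have mle: "real m \<le> real N / real x" unfolding m_def by (rule of_nat_div_le_of_nat)
  have "(\<Sum>y=1..N. (N - x - y) div (x*y+1)) = (\<Sum>y=1..m. (N - x - y) div (x*y+1))"
  proof (rule sum.mono_neutral_right)
    show "{1..m} \<subseteq> {1..N}" unfolding m_def using x by auto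
    show "\<forall>i\<in>{1..N} - {1..m}. (N - x - i) div (x * i + 1) = 0"
    proof
      fix i assume "i \<in> {1..N} - {1..m}"
      then have "m < i" by auto
      then have "N < i * x" unfolding m_def using x div_less_iff_less_mult[of x N i] by auto
      then have "N - x - i < x * i + 1" by (simp add: mult.commute)
      then show "(N - x - i) div (x * i + 1) = 0" by simp
    qed
  qed simp
  then have "real (\<Sum>y=1..N. (N - x - y) div (x*y+1)) = (\<Sum>y=1..m. real ((N - x - y) div (x*y+1)))"
    by simp
  also have "\<dots> \<le> (\<Sum>y=1..m. real N / real x * (1 / real y))"
  proof (rule sum_mono)
    fix y assume y: "y \<in> {1..m}"
    have "real ((N - x - y) div (x*y+1)) \<le> real (N - x - y) / real (x*y+1)"
      by (rule of_nat_div_le_of_nat)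
    also have "\<dots> \<le> real N / real (x*y)"
      using y x by (intro frac_le) auto
    also have "\<dots> = real N / real x * (1 / real y)" by simp
    finally show "real ((N - x - y) div (x*y+1)) \<le> real N / real x * (1 / real y)" .
  qed
  also have "\<dots> = real N / real x * harm m"
    by (simp add: harm_def sum_distrib_left divide_inverse)
  also have "\<dots> \<le> real N / real x * (ln (real N / real x) + 1)"
  proof (rule mult_left_mono)
    have "harm m \<le> ln (real m) + (1::real)" using m1 by (rule harm_le_ln)
    also have "\<dots> \<le> ln (real N / real x) + 1" using mle m1 by simp
    finally show "harm m \<le> ln (real N / real x) + 1" .
  qed simp
  finally show ?thesis .
qed

lemma inner_lower:
  assumes x: "1 \<le> x" "x \<le> N"
  shows "real N / real x * (ln (real N / real x) - 3) \<le> real (\<Sum>y=1..N. (N - x - y) div (x*y+1))"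
proof -
  define m where "m = N div x"
  have xpos: "real x > 0" using x by simp
  have mle: "real m \<le> real N / real x" unfolding m_def by (rule of_nat_div_le_of_nat)
  have mgt: "real N / real x < real m + 1"
  proof -
    have "N < (m + 1) * x" unfolding m_def using x div_less_iff_less_mult[of x N "N div x + 1"] by auto
    then have "real N < (real m + 1) * real x" by (metis of_nat_add of_nat_1 of_nat_less_iff of_nat_mult)
    then show ?thesis using xpos by (simp add: field_simps)
  qed
  have "real N / real x * (ln (real N / real x) - 3)
      \<le> real N / real x * (harm (Suc m) - 1) - 2 * real m"
  proof -
    have "ln (real N / real x) \<le> ln (real m + 2)"
      using mgt x by (subst ln_le_cancel_iff) auto
    also have "\<dots> = ln (real (Suc m) + 1)" by simp
    also have "\<dots> \<le> harm (Suc m)" by (rule ln_le_harm)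
    finally have h: "ln (real N / real x) \<le> harm (Suc m)" .
    have "real N / real x * (ln (real N / real x) - 3) = real N / real x * (ln (real N / real x) - 1) - 2 * (real N / real x)"
      by (simp add: algebra_simps)
    also have "\<dots> \<le> real N / real x * (harm (Suc m) - 1) - 2 * real m"
      using h mle by (intro diff_mono mult_left_mono) auto
    finally show ?thesis .
  qed
  also have "\<dots> = (\<Sum>y=1..m. real N / (real x * (real y + 1)) - 2)"
    by (simp add: sum_subtractf harm_shift[symmetric] sum_distrib_left)
  also have "\<dots> \<le> (\<Sum>y=1..m. real ((N - x - y) div (x*y+1)))"
  proof (rule sum_mono)
    fix y assume y: "y \<in> {1..m}"
    define X where "X = real x"
    define Y where "Y = real y"
    have X1: "X \<ge> 1" "Y \<ge> 1" using x y by (auto simp: X_def Y_def)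
    have "real ((N - x - y) div (x*y+1)) \<ge> real (N - x - y) / real (x*y+1) - 1"
      by (rule real_div_ge) simp
    moreover have "real (N - x - y) \<ge> real N - X - Y" unfolding X_def Y_def by linarith
    moreover have "real (x*y+1) = X*Y + 1" by (simp add: X_def Y_def)
    ultimately have a: "real ((N - x - y) div (x*y+1)) \<ge> (real N - X - Y) / (X*Y+1) - 1"
      using X1 by (smt (verit, ccfv_SIG) divide_right_mono mult_nonneg_nonneg)
    have "0 \<le> (X - 1) * (Y - 1)" using X1 by simp
    then have "X + Y \<le> X*Y + 1" by (simp add: algebra_simps)
    then have b: "(X + Y) / (X*Y+1) \<le> 1" using X1 by (simp add: divide_le_eq_1)
    have c: "real N / (X*(Y+1)) \<le> real N / (X*Y+1)"
    proof (rule divide_left_mono)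
      show "X*Y+1 \<le> X*(Y+1)" using X1 by (simp add: algebra_simps)
      have "0 < X*(Y+1)" "0 < X*Y+1" using X1 by (simp_all add: add_pos_pos)
      then show "0 < (X*(Y+1)) * (X*Y+1)" by (rule mult_pos_pos)
    qed simp
    have "(real N - X - Y) / (X*Y+1) = real N / (X*Y+1) - (X + Y) / (X*Y+1)"
      by (simp add: diff_divide_distrib add_divide_distrib)
    with a b c have "real ((N - x - y) div (x*y+1)) \<ge> real N / (X*(Y+1)) - 2" by linarith
    then show "real N / (real x * (real y + 1)) - 2 \<le> real ((N - x - y) div (x*y+1))"
      by (simp add: X_def Y_def)
  qed
  also have "\<dots> = real (\<Sum>y=1..m. (N - x - y) div (x*y+1))" by simp
  also have "\<dots> \<le> real (\<Sum>y=1..N. (N - x - y) div (x*y+1))"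
    unfolding of_nat_le_iff by (rule sum_mono2) (auto simp: m_def)
  finally show ?thesis .
qed

lemma total_bounds:
  assumes N: "N \<ge> 1"
  shows "real N * (ln (real N) ^ 2 / 2 - 3 * ln (real N) - 3) \<le> (\<Sum>n\<in>{1..N}. real (R3 n))"
    and "(\<Sum>n\<in>{1..N}. real (R3 n)) \<le> real N * (ln (real N) ^ 2 / 2 + 2 * ln (real N) + 1)"
proof -
  define T where "T = (\<Sum>k=1..N. ln (real N / real k) / real k)"
  have hsum: "(\<Sum>k=1..N. 1 / real k) = (harm N :: real)" by (simp add: harm_def divide_inverse)
  have S: "(\<Sum>n\<in>{1..N}. real (R3 n)) = (\<Sum>x=1..N. real (\<Sum>y=1..N. (N - x - y) div (x*y+1)))"
  proof -
    have "(\<Sum>n\<in>{1..N}. real (R3 n)) = real (\<Sum>n\<in>{1..N}. R3 n)" by (simp only: of_nat_sum)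
    also have "\<dots> = real (\<Sum>x=1..N. \<Sum>y=1..N. (N - x - y) div (x*y+1))" by (simp only: sum_R3_eq)
    also have "\<dots> = (\<Sum>x=1..N. real (\<Sum>y=1..N. (N - x - y) div (x*y+1)))" by (simp only: of_nat_sum)
    finally show ?thesis .
  qed
  have H1: "harm N \<le> ln (real N) + (1::real)" using N by (rule harm_le_ln)
  have H0: "0 \<le> ln (real N)" using N by simp
  have T1: "ln (real N) ^ 2 / 2 \<le> T" "T \<le> ln (real N) + ln (real N) ^ 2 / 2"
    unfolding T_def using T_bounds[OF N] by auto
  have "(\<Sum>x=1..N. real N / real x * (ln (real N / real x) - 3)) = real N * (T - 3 * harm N)"
  proof -
    have "(\<Sum>x=1..N. real N / real x * (ln (real N / real x) - 3))
        = (\<Sum>x=1..N. real N * (ln (real N / real x) / real x) - (3 * real N) * (1 / real x))"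
      by (rule sum.cong) (simp_all add: divide_simps right_diff_distrib)
    also have "\<dots> = real N * T - (3 * real N) * harm N"
      by (simp only: sum_subtractf sum_distrib_left[symmetric] T_def hsum)
    finally show ?thesis by (simp add: right_diff_distrib)
  qed
  also have "\<dots> \<ge> real N * (ln (real N) ^ 2 / 2 - 3 * ln (real N) - 3)"
    using T1 H1 by (intro mult_left_mono) auto
  finally have "real N * (ln (real N) ^ 2 / 2 - 3 * ln (real N) - 3) \<le> (\<Sum>x=1..N. real N / real x * (ln (real N / real x) - 3))" .
  also have "\<dots> \<le> (\<Sum>x=1..N. real (\<Sum>y=1..N. (N - x - y) div (x*y+1)))"
    by (rule sum_mono) (rule inner_lower, auto)
  finally show "real N * (ln (real N) ^ 2 / 2 - 3 * ln (real N) - 3) \<le> (\<Sum>n\<in>{1..N}. real (R3 n))"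
    using S by simp
  have "(\<Sum>x=1..N. real (\<Sum>y=1..N. (N - x - y) div (x*y+1))) \<le> (\<Sum>x=1..N. real N / real x * (ln (real N / real x) + 1))"
    by (rule sum_mono) (rule inner_upper, auto)
  also have "\<dots> = real N * (T + harm N)"
  proof -
    have "(\<Sum>x=1..N. real N / real x * (ln (real N / real x) + 1))
        = (\<Sum>x=1..N. real N * (ln (real N / real x) / real x) + real N * (1 / real x))"
      by (rule sum.cong) (simp_all add: divide_simps distrib_left)
    also have "\<dots> = real N * T + real N * harm N"
      by (simp only: sum.distrib sum_distrib_left[symmetric] T_def hsum)
    finally show ?thesis by (simp add: distrib_left)
  qed
  also have "\<dots> \<le> real N * (ln (real N) ^ 2 / 2 + 2 * ln (real N) + 1)"
    using T1 H1 by (intro mult_left_mono) auto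
  finally show "(\<Sum>n\<in>{1..N}. real (R3 n)) \<le> real N * (ln (real N) ^ 2 / 2 + 2 * ln (real N) + 1)"
    using S by simp
qed

lemma lim_aux:
  fixes a b :: real
  shows "(\<lambda>N::nat. (ln (real N) ^ 2 / 2 + a * ln (real N) + b) / ((1/2) * (ln (real N))\<^sup>2)) \<longlonglongrightarrow> 1"
proof -
  have lnN: "filterlim (\<lambda>N::nat. ln (real N)) at_top sequentially"
    by (rule filterlim_compose[OF ln_at_top filterlim_real_sequentially])
  have e: "(\<lambda>N::nat. inverse (ln (real N))) \<longlonglongrightarrow> 0"
    by (rule tendsto_inverse_0_at_top[OF lnN])
  have "(\<lambda>N::nat. 1 + 2*a * inverse (ln (real N)) + 2*b * (inverse (ln (real N)))^2) \<longlonglongrightarrow> 1 + 2*a*0 + 2*b*0^2"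
    by (intro tendsto_intros e)
  then have lim: "(\<lambda>N::nat. 1 + 2*a * inverse (ln (real N)) + 2*b * (inverse (ln (real N)))^2) \<longlonglongrightarrow> 1"
    by simp
  have ev: "eventually (\<lambda>N::nat. 1 + 2*a * inverse (ln (real N)) + 2*b * (inverse (ln (real N)))^2
      = (ln (real N) ^ 2 / 2 + a * ln (real N) + b) / ((1/2) * (ln (real N))\<^sup>2)) sequentially"
    using eventually_ge_at_top[of "2::nat"]
  proof eventually_elim
    case (elim N)
    then have "ln (real N) > 0" by simp
    then show ?case by (simp add: field_simps power2_eq_square)
  qed
  show ?thesis by (rule Lim_transform_eventually[OF lim ev])
qed

lemma lim_lower: "(\<lambda>N::nat. (ln (real N) ^ 2 / 2 - 3 * ln (real N) - 3) / ((1/2) * (ln (real N))\<^sup>2)) \<longlonglongrightarrow> 1"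
  using lim_aux[of "-3" "-3"] by (simp add: algebra_simps)

lemma lim_upper: "(\<lambda>N::nat. (ln (real N) ^ 2 / 2 + 2 * ln (real N) + 1) / ((1/2) * (ln (real N))\<^sup>2)) \<longlonglongrightarrow> 1"
  using lim_aux[of "2" "1"] by (simp add: algebra_simps)

theorem theorem1:
  shows "(\<lambda>N::nat. (\<Sum>n\<in>{1..N}. real (R3 n)) / real N)
           \<sim>[at_top] (\<lambda>N. (1/2) * (ln (real N))\<^sup>2)"
proof (rule asymp_equivI')
  let ?f = "\<lambda>N::nat. (\<Sum>n\<in>{1..N}. real (R3 n)) / real N"
  let ?g = "\<lambda>N::nat. (1/2) * (ln (real N))\<^sup>2"
  let ?L = "\<lambda>N::nat. (ln (real N) ^ 2 / 2 - 3 * ln (real N) - 3) / ((1/2) * (ln (real N))\<^sup>2)"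
  let ?U = "\<lambda>N::nat. (ln (real N) ^ 2 / 2 + 2 * ln (real N) + 1) / ((1/2) * (ln (real N))\<^sup>2)"
  show "((\<lambda>N. ?f N / ?g N) \<longlongrightarrow> 1) at_top"
  proof (rule tendsto_sandwich[OF _ _ lim_lower lim_upper])
    have ev: "eventually (\<lambda>N::nat. N \<ge> 2) at_top" by (rule eventually_ge_at_top)
    show "eventually (\<lambda>N. ?L N \<le> ?f N / ?g N) at_top"
      using ev
    proof eventually_elim
      case (elim N)
      then have N1: "N \<ge> 1" and Npos: "real N > 0" by auto
      have "ln (real N) > 0" using elim by simp
      then have gpos: "?g N > 0" by simp
      have "real N * (ln (real N) ^ 2 / 2 - 3 * ln (real N) - 3) \<le> (\<Sum>n\<in>{1..N}. real (R3 n))"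
        by (rule total_bounds(1)[OF N1])
      then have "ln (real N) ^ 2 / 2 - 3 * ln (real N) - 3 \<le> ?f N"
        using Npos by (subst pos_le_divide_eq) (simp_all only: mult.commute)
      then show ?case using gpos by (intro divide_right_mono) auto
    qed
    show "eventually (\<lambda>N. ?f N / ?g N \<le> ?U N) at_top"
      using ev
    proof eventually_elim
      case (elim N)
      then have N1: "N \<ge> 1" and Npos: "real N > 0" by auto
      have "ln (real N) > 0" using elim by simp
      then have gpos: "?g N > 0" by simp
      have "(\<Sum>n\<in>{1..N}. real (R3 n)) \<le> real N * (ln (real N) ^ 2 / 2 + 2 * ln (real N) + 1)"
        by (rule total_bounds(2)[OF N1])
      then have "?f N \<le> ln (real N) ^ 2 / 2 + 2 * ln (real N) + 1"
        using Npos by (subst pos_divide_le_eq) (simp_all only: mult.commute)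
      then show ?case using gpos by (intro divide_right_mono) auto
    qed
  qed
qed

end
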